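(* Let $\mathcal{X}$ be a finite set, $\pi$ a probability mass function on $\mathcal{X}$ with full support, and $P$ an ergodic $\pi$-reversible transition matrix. Let a group $\mathcal{G}$ act on $\mathcal{X}$ and let $G$ and $M$ be the Gibbs and Metropolis–Hastings orbit kernels for this same action. Let $\theta:=\|M-G\|_{\ell^2_0(\pi)\to\ell^2_0(\pi)}$. Then $0\le\rho(MPM)-\rho(GPG)\le\rho(P)(2\theta+\theta^2)$.
   Context: $\langle f,g\rangle_\pi=\sum_x f(x)g(x)\pi(x)$, $\ell^2_0(\pi)=\{f:\sum_xf(x)\pi(x)=0\}$, with operator norm taken with respect to $\|\cdot\|_\pi$. With $\mathcal{O}(x)$ the orbit of $x$: $G(x,y)=\pi(y)/\pi(\mathcal{O}(x))$ for $y\in\mathcal{O}(x)$, else $0$; $M(x,y)=\frac{1}{|\mathcal{O}(x)|-1}\min\{1,\pi(y)/\pi(x)\}$ for $y\in\mathcal{O}(x)\setminus\{x\}$, $0$ off the orbit, $M(x,x)=1-\sum_{y\ne x}M(x,y)$. For a $\pi$-self-adjoint kernel $K$, $\rho(K)=\sup_{0\ne f\in\ell^2_0(\pi)}|\langle f,Kf\rangle_\pi|/\langle f,f\rangle_\pi$ (the second-largest eigenvalue in modulus). Equivalently, $\theta$ is the largest absolute value of an eigenvalue of $M$ restricted to the orthogonal complement in $\ell^2(\pi)$ of the functions constant on orbits. *)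

theory Defs
  imports "HOL-Analysis.Analysis" "HOL-Algebra.Group_Action"
begin

definition kmul :: "('x::finite \<Rightarrow> 'x \<Rightarrow> real) \<Rightarrow> ('x \<Rightarrow> 'x \<Rightarrow> real) \<Rightarrow> 'x \<Rightarrow> 'x \<Rightarrow> real"
  where "kmul K L x z = (\<Sum>y\<in>UNIV. K x y * L y z)"

definition kapply :: "('x::finite \<Rightarrow> 'x \<Rightarrow> real) \<Rightarrow> ('x \<Rightarrow> real) \<Rightarrow> 'x \<Rightarrow> real"
  where "kapply K f x = (\<Sum>y\<in>UNIV. K x y * f y)"

fun kpow :: "('x::finite \<Rightarrow> 'x \<Rightarrow> real) \<Rightarrow> nat \<Rightarrow> 'x \<Rightarrow> 'x \<Rightarrow> real" where
  "kpow K 0 = (\<lambda>x y. if x = y then 1 else 0)"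
| "kpow K (Suc n) = kmul (kpow K n) K"

definition pmf_full :: "('x::finite \<Rightarrow> real) \<Rightarrow> bool"
  where "pmf_full \<pi> \<longleftrightarrow> (\<forall>x. \<pi> x > 0) \<and> (\<Sum>x\<in>UNIV. \<pi> x) = 1"

definition stochastic :: "('x::finite \<Rightarrow> 'x \<Rightarrow> real) \<Rightarrow> bool"
  where "stochastic P \<longleftrightarrow> (\<forall>x y. P x y \<ge> 0) \<and> (\<forall>x. (\<Sum>y\<in>UNIV. P x y) = 1)"

definition reversible :: "('x::finite \<Rightarrow> real) \<Rightarrow> ('x \<Rightarrow> 'x \<Rightarrow> real) \<Rightarrow> bool"
  where "reversible \<pi> P \<longleftrightarrow> (\<forall>x y. \<pi> x * P x y = \<pi> y * P y x)"

definition irreducible :: "('x::finite \<Rightarrow> 'x \<Rightarrow> real) \<Rightarrow> bool"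
  where "irreducible P \<longleftrightarrow> (\<forall>x y. \<exists>n. kpow P n x y > 0)"

definition period :: "('x::finite \<Rightarrow> 'x \<Rightarrow> real) \<Rightarrow> 'x \<Rightarrow> nat"
  where "period P x = Gcd {n. n > 0 \<and> kpow P n x x > 0}"

definition aperiodic :: "('x::finite \<Rightarrow> 'x \<Rightarrow> real) \<Rightarrow> bool"
  where "aperiodic P \<longleftrightarrow> (\<forall>x. period P x = 1)"

definition ergodic :: "('x::finite \<Rightarrow> 'x \<Rightarrow> real) \<Rightarrow> bool"
  where "ergodic P \<longleftrightarrow> irreducible P \<and> aperiodic P"

definition inner_pi :: "('x::finite \<Rightarrow> real) \<Rightarrow> ('x \<Rightarrow> real) \<Rightarrow> ('x \<Rightarrow> real) \<Rightarrow> real"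
  where "inner_pi \<pi> f g = (\<Sum>x\<in>UNIV. f x * g x * \<pi> x)"

definition l2_0 :: "('x::finite \<Rightarrow> real) \<Rightarrow> ('x \<Rightarrow> real) set"
  where "l2_0 \<pi> = {f. (\<Sum>x\<in>UNIV. f x * \<pi> x) = 0}"

definition opnorm_l2_0 :: "('x::finite \<Rightarrow> real) \<Rightarrow> ('x \<Rightarrow> 'x \<Rightarrow> real) \<Rightarrow> real"
  where "opnorm_l2_0 \<pi> K = Sup (insert 0
     {sqrt (inner_pi \<pi> (kapply K f) (kapply K f)) / sqrt (inner_pi \<pi> f f) | f. f \<in> l2_0 \<pi> \<and> f \<noteq> (\<lambda>_. 0)})"

definition rho :: "('x::finite \<Rightarrow> real) \<Rightarrow> ('x \<Rightarrow> 'x \<Rightarrow> real) \<Rightarrow> real"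
  where "rho \<pi> K = Sup (insert 0
     {\<bar>inner_pi \<pi> f (kapply K f)\<bar> / inner_pi \<pi> f f | f. f \<in> l2_0 \<pi> \<and> f \<noteq> (\<lambda>_. 0)})"

definition gibbs_kernel :: "('x::finite \<Rightarrow> real) \<Rightarrow> ('x \<Rightarrow> 'x set) \<Rightarrow> 'x \<Rightarrow> 'x \<Rightarrow> real"
  where "gibbs_kernel \<pi> Orb x y = (if y \<in> Orb x then \<pi> y / (\<Sum>z\<in>Orb x. \<pi> z) else 0)"

definition mh_kernel :: "('x::finite \<Rightarrow> real) \<Rightarrow> ('x \<Rightarrow> 'x set) \<Rightarrow> 'x \<Rightarrow> 'x \<Rightarrow> real"
  where "mh_kernel \<pi> Orb x y =
     (if y \<in> Orb x \<and> y \<noteq> x then (1 / (real (card (Orb x)) - 1)) * min 1 (\<pi> y / \<pi> x)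
      else if y = x then 1 - (\<Sum>z\<in>Orb x - {x}. (1 / (real (card (Orb x)) - 1)) * min 1 (\<pi> z / \<pi> x))
      else 0)"

end

theory Submission
  imports Defs
begin


lemma kapply_kmul: "kapply (kmul K L) f = kapply K (kapply L f)"
  unfolding kapply_def kmul_def
  by (auto simp: sum_distrib_left sum_distrib_right mult.assoc intro!: ext sum.swap[THEN trans])

lemma ip_sym: "inner_pi \<pi> f g = inner_pi \<pi> g f"
  unfolding inner_pi_def by (simp add: mult.commute mult.left_commute)

lemma ip_add_l: "inner_pi \<pi> (\<lambda>x. f x + g x) h = inner_pi \<pi> f h + inner_pi \<pi> g h"
  unfolding inner_pi_def by (simp add: algebra_simps sum.distrib)
lemma ip_add_r: "inner_pi \<pi> h (\<lambda>x. f x + g x) = inner_pi \<pi> h f + inner_pi \<pi> h g"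
  unfolding inner_pi_def by (simp add: algebra_simps sum.distrib)
lemma ip_diff_l: "inner_pi \<pi> (\<lambda>x. f x - g x) h = inner_pi \<pi> f h - inner_pi \<pi> g h"
  unfolding inner_pi_def by (simp add: algebra_simps sum_subtractf)
lemma ip_diff_r: "inner_pi \<pi> h (\<lambda>x. f x - g x) = inner_pi \<pi> h f - inner_pi \<pi> h g"
  unfolding inner_pi_def by (simp add: algebra_simps sum_subtractf)
lemma ip_scale_l: "inner_pi \<pi> (\<lambda>x. c * f x) h = c * inner_pi \<pi> f h"
  unfolding inner_pi_def by (simp add: algebra_simps sum_distrib_left)
lemma ip_scale_r: "inner_pi \<pi> h (\<lambda>x. c * f x) = c * inner_pi \<pi> h f"
  unfolding inner_pi_def by (simp add: algebra_simps sum_distrib_left)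

lemma kapply_add: "kapply K (\<lambda>x. f x + g x) = (\<lambda>x. kapply K f x + kapply K g x)"
  unfolding kapply_def by (simp add: algebra_simps sum.distrib)
lemma kapply_diff: "kapply K (\<lambda>x. f x - g x) = (\<lambda>x. kapply K f x - kapply K g x)"
  unfolding kapply_def by (simp add: algebra_simps sum_subtractf)
lemma kapply_scale: "kapply K (\<lambda>x. c * f x) = (\<lambda>x. c * kapply K f x)"
  unfolding kapply_def by (simp add: algebra_simps sum_distrib_left)
lemma kapply_kdiff: "kapply (\<lambda>x y. K x y - L x y) f = (\<lambda>x. kapply K f x - kapply L f x)"
  unfolding kapply_def by (simp add: algebra_simps sum_subtractf)
lemma kapply_zero: "kapply K (\<lambda>_. 0) = (\<lambda>_. 0)"
  unfolding kapply_def by simp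

lemma selfadj:
  assumes "\<And>x y. \<pi> x * K x y = \<pi> y * K y x"
  shows "inner_pi \<pi> f (kapply K g) = inner_pi \<pi> (kapply K f) g"
proof -
  have "inner_pi \<pi> f (kapply K g) = (\<Sum>x\<in>UNIV. \<Sum>y\<in>UNIV. f x * g y * (\<pi> x * K x y))"
    unfolding inner_pi_def kapply_def
    by (simp add: sum_distrib_left sum_distrib_right algebra_simps)
  also have "\<dots> = (\<Sum>x\<in>UNIV. \<Sum>y\<in>UNIV. f x * g y * (\<pi> y * K y x))"
    by (simp add: assms)
  also have "\<dots> = (\<Sum>y\<in>UNIV. \<Sum>x\<in>UNIV. f x * g y * (\<pi> y * K y x))"
    by (rule sum.swap)
  also have "\<dots> = inner_pi \<pi> (kapply K f) g"
    unfolding inner_pi_def kapply_def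
    by (simp add: sum_distrib_left sum_distrib_right algebra_simps)
  finally show ?thesis .
qed

lemma l2_0_pres:
  assumes "\<And>x y. \<pi> x * K x y = \<pi> y * K y x" and "\<And>x. (\<Sum>y\<in>UNIV. K x y) = c"
    and "f \<in> l2_0 \<pi>"
  shows "kapply K f \<in> l2_0 \<pi>"
proof -
  have "(\<Sum>x\<in>UNIV. kapply K f x * \<pi> x) = (\<Sum>x\<in>UNIV. \<Sum>y\<in>UNIV. f y * (\<pi> x * K x y))"
    unfolding kapply_def by (simp add: sum_distrib_right sum_distrib_left algebra_simps)
  also have "\<dots> = (\<Sum>y\<in>UNIV. \<Sum>x\<in>UNIV. f y * (\<pi> y * K y x))"
    by (subst sum.swap) (simp add: assms(1))
  also have "\<dots> = (\<Sum>y\<in>UNIV. f y * \<pi> y * c)"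
    by (simp add: sum_distrib_left[symmetric] assms(2) mult.assoc)
  also have "\<dots> = 0" using assms(3) unfolding l2_0_def by (simp add: sum_distrib_right[symmetric])
  finally show ?thesis unfolding l2_0_def by simp
qed

lemma l2_0_add: "f \<in> l2_0 \<pi> \<Longrightarrow> g \<in> l2_0 \<pi> \<Longrightarrow> (\<lambda>x. f x + g x) \<in> l2_0 \<pi>"
  unfolding l2_0_def by (simp add: algebra_simps sum.distrib)
lemma l2_0_diff: "f \<in> l2_0 \<pi> \<Longrightarrow> g \<in> l2_0 \<pi> \<Longrightarrow> (\<lambda>x. f x - g x) \<in> l2_0 \<pi>"
  unfolding l2_0_def by (simp add: algebra_simps sum_subtractf)
lemma l2_0_scale: "f \<in> l2_0 \<pi> \<Longrightarrow> (\<lambda>x. c * f x) \<in> l2_0 \<pi>"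
  unfolding l2_0_def by (simp add: mult.assoc sum_distrib_left[symmetric])

lemma term_nonneg: "pmf_full \<pi> \<Longrightarrow> 0 \<le> f x * f x * \<pi> x"
  unfolding pmf_full_def by (metis zero_le_square less_imp_le mult_nonneg_nonneg)

lemma ip_nonneg: "pmf_full \<pi> \<Longrightarrow> 0 \<le> inner_pi \<pi> f f"
  unfolding inner_pi_def by (intro sum_nonneg term_nonneg)

lemma ip_zero: assumes "pmf_full \<pi>" "inner_pi \<pi> f f = 0" shows "f = (\<lambda>_. 0)"
proof -
  have "\<forall>x\<in>UNIV. f x * f x * \<pi> x = 0"
    using assms unfolding inner_pi_def
    by (subst sum_nonneg_eq_0_iff[symmetric]) (auto intro: term_nonneg)
  thus ?thesis using assms(1) unfolding pmf_full_def by (auto intro!: ext simp: less_imp_neq[symmetric])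
qed




lemma pi_min: assumes "pmf_full \<pi>" shows "\<exists>m>0. \<forall>x. m \<le> \<pi> x"
proof -
  have "Min (range \<pi>) > 0" using assms unfolding pmf_full_def by auto
  moreover have "\<forall>x. Min (range \<pi>) \<le> \<pi> x" by auto
  ultimately show ?thesis by blast
qed

lemma pt_bound:
  assumes "pmf_full \<pi>" "m > 0" "\<forall>x. m \<le> \<pi> x"
  shows "\<bar>f y * f z\<bar> \<le> inner_pi \<pi> f f / m"
proof -
  have sq: "m * (f y * f y) \<le> inner_pi \<pi> f f" for y
  proof -
    have "m * (f y * f y) \<le> f y * f y * \<pi> y"
      using assms(3) by (simp add: mult.commute mult_right_mono)
    also have "\<dots> \<le> inner_pi \<pi> f f" unfolding inner_pi_def
      by (rule member_le_sum) (auto intro: term_nonneg[OF assms(1)])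
    finally show ?thesis .
  qed
  have "\<bar>f y * f z\<bar> \<le> (f y * f y + f z * f z) / 2"
  proof -
    have "0 \<le> (\<bar>f y\<bar> - \<bar>f z\<bar>) * (\<bar>f y\<bar> - \<bar>f z\<bar>)" by simp
    moreover have "\<bar>f y\<bar> * \<bar>f y\<bar> = f y * f y" "\<bar>f z\<bar> * \<bar>f z\<bar> = f z * f z" by (simp_all add: abs_mult_self_eq)
    ultimately show ?thesis by (simp add: abs_mult algebra_simps)
  qed
  also have "\<dots> \<le> inner_pi \<pi> f f / m"
    using sq[of y] sq[of z] assms(2) by (simp add: field_simps)
  finally show ?thesis .
qed

lemma quad_bound:
  assumes "pmf_full \<pi>"
  shows "\<exists>C. \<forall>f. \<bar>inner_pi \<pi> f (kapply K f)\<bar> \<le> C * inner_pi \<pi> f f"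
proof -
  obtain m where m: "m > 0" "\<forall>x. m \<le> \<pi> x" using pi_min[OF assms] by blast
  define C where "C = (\<Sum>x\<in>UNIV. \<Sum>y\<in>UNIV. \<bar>K x y\<bar> * \<pi> x) / m"
  have "\<bar>inner_pi \<pi> f (kapply K f)\<bar> \<le> C * inner_pi \<pi> f f" for f
  proof -
    have "inner_pi \<pi> f (kapply K f) = (\<Sum>x\<in>UNIV. \<Sum>y\<in>UNIV. (f x * f y) * (K x y * \<pi> x))"
      unfolding inner_pi_def kapply_def by (simp add: sum_distrib_left sum_distrib_right algebra_simps)
    also have "\<bar>\<dots>\<bar> \<le> (\<Sum>x\<in>UNIV. \<Sum>y\<in>UNIV. \<bar>(f x * f y) * (K x y * \<pi> x)\<bar>)"
      by (rule order_trans[OF sum_abs]) (intro sum_mono sum_abs)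
    also have "\<dots> \<le> (\<Sum>x\<in>UNIV. \<Sum>y\<in>UNIV. (inner_pi \<pi> f f / m) * (\<bar>K x y\<bar> * \<pi> x))"
    proof (intro sum_mono)
      fix x y
      have "\<pi> x > 0" using assms unfolding pmf_full_def by auto
      hence "\<bar>(f x * f y) * (K x y * \<pi> x)\<bar> = \<bar>f x * f y\<bar> * (\<bar>K x y\<bar> * \<pi> x)"
        by (simp add: abs_mult)
      also have "\<dots> \<le> (inner_pi \<pi> f f / m) * (\<bar>K x y\<bar> * \<pi> x)"
        using pt_bound[OF assms m] \<open>\<pi> x > 0\<close> by (intro mult_right_mono) auto
      finally show "\<bar>(f x * f y) * (K x y * \<pi> x)\<bar> \<le> (inner_pi \<pi> f f / m) * (\<bar>K x y\<bar> * \<pi> x)" .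
    qed
    also have "\<dots> = C * inner_pi \<pi> f f"
      unfolding C_def by (simp add: sum_distrib_left sum_distrib_right sum_divide_distrib algebra_simps)
    finally show ?thesis .
  qed
  thus ?thesis by blast
qed

lemma norm_bound:
  assumes "pmf_full \<pi>"
  shows "\<exists>C. \<forall>f. inner_pi \<pi> (kapply K f) (kapply K f) \<le> C * inner_pi \<pi> f f"
proof -
  obtain m where m: "m > 0" "\<forall>x. m \<le> \<pi> x" using pi_min[OF assms] by blast
  define C where "C = (\<Sum>x\<in>UNIV. \<Sum>y\<in>UNIV. \<Sum>z\<in>UNIV. \<bar>K x y * K x z\<bar> * \<pi> x) / m"
  have "inner_pi \<pi> (kapply K f) (kapply K f) \<le> C * inner_pi \<pi> f f" for f
  proof -
    have "inner_pi \<pi> (kapply K f) (kapply K f) = (\<Sum>x\<in>UNIV. \<Sum>y\<in>UNIV. \<Sum>z\<in>UNIV. (f y * f z) * (K x y * K x z * \<pi> x))"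
      unfolding inner_pi_def kapply_def by (simp add: sum_distrib_left sum_distrib_right algebra_simps)
    also have "\<dots> \<le> (\<Sum>x\<in>UNIV. \<Sum>y\<in>UNIV. \<Sum>z\<in>UNIV. (inner_pi \<pi> f f / m) * (\<bar>K x y * K x z\<bar> * \<pi> x))"
    proof (intro sum_mono)
      fix x y z
      have "\<pi> x > 0" using assms unfolding pmf_full_def by auto
      have "(f y * f z) * (K x y * K x z * \<pi> x) \<le> \<bar>f y * f z\<bar> * (\<bar>K x y * K x z\<bar> * \<pi> x)"
        using \<open>\<pi> x > 0\<close> by (simp add: abs_mult[symmetric] abs_le_iff)
      also have "\<dots> \<le> (inner_pi \<pi> f f / m) * (\<bar>K x y * K x z\<bar> * \<pi> x)"
        using pt_bound[OF assms m] \<open>\<pi> x > 0\<close> by (intro mult_right_mono) auto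
      finally show "(f y * f z) * (K x y * K x z * \<pi> x) \<le> (inner_pi \<pi> f f / m) * (\<bar>K x y * K x z\<bar> * \<pi> x)" .
    qed
    also have "\<dots> = C * inner_pi \<pi> f f"
      unfolding C_def by (simp add: sum_distrib_left sum_distrib_right sum_divide_distrib algebra_simps)
    finally show ?thesis .
  qed
  thus ?thesis by blast
qed




lemma rho_bdd:
  assumes "pmf_full \<pi>"
  shows "bdd_above (insert 0 {\<bar>inner_pi \<pi> f (kapply K f)\<bar> / inner_pi \<pi> f f | f. f \<in> l2_0 \<pi> \<and> f \<noteq> (\<lambda>_. 0)})"
proof -
  obtain C where C: "\<And>f. \<bar>inner_pi \<pi> f (kapply K f)\<bar> \<le> C * inner_pi \<pi> f f"
    using quad_bound[OF assms] by blast
  have "\<bar>inner_pi \<pi> f (kapply K f)\<bar> / inner_pi \<pi> f f \<le> max C 0" for f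
  proof (cases "inner_pi \<pi> f f = 0")
    case False
    with ip_nonneg[OF assms, of f] have "inner_pi \<pi> f f > 0" by simp
    have "C * inner_pi \<pi> f f \<le> max C 0 * inner_pi \<pi> f f"
      using \<open>inner_pi \<pi> f f > 0\<close> by (intro mult_right_mono) auto
    hence "\<bar>inner_pi \<pi> f (kapply K f)\<bar> \<le> max C 0 * inner_pi \<pi> f f" using C[of f] by linarith
    thus ?thesis using \<open>inner_pi \<pi> f f > 0\<close> by (simp add: divide_le_eq)
  qed simp
  thus ?thesis unfolding bdd_above_def by (intro exI[of _ "max C 0"]) auto
qed

lemma rho_nonneg: "pmf_full \<pi> \<Longrightarrow> 0 \<le> rho \<pi> K"
  unfolding rho_def by (rule cSup_upper[OF _ rho_bdd]) auto

lemma rho_upper: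
  assumes "pmf_full \<pi>" "f \<in> l2_0 \<pi>"
  shows "\<bar>inner_pi \<pi> f (kapply K f)\<bar> \<le> rho \<pi> K * inner_pi \<pi> f f"
proof (cases "f = (\<lambda>_. 0)")
  case True thus ?thesis by (simp add: inner_pi_def kapply_def)
next
  case False
  hence pos: "inner_pi \<pi> f f > 0" using ip_nonneg[OF assms(1), of f] ip_zero[OF assms(1), of f]
    by fastforce
  have "\<bar>inner_pi \<pi> f (kapply K f)\<bar> / inner_pi \<pi> f f \<le> rho \<pi> K"
    unfolding rho_def by (rule cSup_upper[OF _ rho_bdd[OF assms(1)]]) (use assms False in auto)
  thus ?thesis using pos by (simp add: divide_le_eq)
qed

lemma rho_least:
  assumes "\<And>f. f \<in> l2_0 \<pi> \<Longrightarrow> f \<noteq> (\<lambda>_. 0) \<Longrightarrow> \<bar>inner_pi \<pi> f (kapply K f)\<bar> \<le> r * inner_pi \<pi> f f"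
    and "0 \<le> r" and "pmf_full \<pi>"
  shows "rho \<pi> K \<le> r"
  unfolding rho_def
proof (rule cSup_least)
  fix v assume "v \<in> insert 0 {\<bar>inner_pi \<pi> f (kapply K f)\<bar> / inner_pi \<pi> f f | f. f \<in> l2_0 \<pi> \<and> f \<noteq> (\<lambda>_. 0)}"
  then show "v \<le> r"
  proof
    assume "v = 0" thus ?thesis using assms(2) by simp
  next
    assume "v \<in> {\<bar>inner_pi \<pi> f (kapply K f)\<bar> / inner_pi \<pi> f f | f. f \<in> l2_0 \<pi> \<and> f \<noteq> (\<lambda>_. 0)}"
    then obtain f where f: "f \<in> l2_0 \<pi>" "f \<noteq> (\<lambda>_. 0)" and v: "v = \<bar>inner_pi \<pi> f (kapply K f)\<bar> / inner_pi \<pi> f f"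
      by blast
    have pos: "inner_pi \<pi> f f > 0" using ip_nonneg[OF assms(3), of f] ip_zero[OF assms(3), of f] f
      by fastforce
    show ?thesis using assms(1)[OF f] pos v by (simp add: divide_le_eq)
  qed
qed simp

lemma op_bdd:
  assumes "pmf_full \<pi>"
  shows "bdd_above (insert 0 {sqrt (inner_pi \<pi> (kapply K f) (kapply K f)) / sqrt (inner_pi \<pi> f f) | f. f \<in> l2_0 \<pi> \<and> f \<noteq> (\<lambda>_. 0)})"
proof -
  obtain C where C: "\<And>f. inner_pi \<pi> (kapply K f) (kapply K f) \<le> C * inner_pi \<pi> f f"
    using norm_bound[OF assms] by blast
  have "sqrt (inner_pi \<pi> (kapply K f) (kapply K f)) / sqrt (inner_pi \<pi> f f) \<le> sqrt (max C 0)" for f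
  proof (cases "inner_pi \<pi> f f = 0")
    case False
    with ip_nonneg[OF assms, of f] have p: "inner_pi \<pi> f f > 0" by simp
    have "sqrt (inner_pi \<pi> (kapply K f) (kapply K f)) \<le> sqrt (max C 0 * inner_pi \<pi> f f)"
      using C[of f] p by (intro real_sqrt_le_mono) (smt (verit) mult_right_mono)
    also have "\<dots> = sqrt (max C 0) * sqrt (inner_pi \<pi> f f)" by (simp add: real_sqrt_mult)
    finally show ?thesis using p by (simp add: divide_le_eq)
  qed simp
  thus ?thesis unfolding bdd_above_def by (intro exI[of _ "sqrt (max C 0)"]) auto
qed

lemma op_nonneg: "pmf_full \<pi> \<Longrightarrow> 0 \<le> opnorm_l2_0 \<pi> K"
  unfolding opnorm_l2_0_def by (rule cSup_upper[OF _ op_bdd]) auto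

lemma op_upper:
  assumes "pmf_full \<pi>" "f \<in> l2_0 \<pi>"
  shows "sqrt (inner_pi \<pi> (kapply K f) (kapply K f)) \<le> opnorm_l2_0 \<pi> K * sqrt (inner_pi \<pi> f f)"
proof (cases "f = (\<lambda>_. 0)")
  case True thus ?thesis by (simp add: inner_pi_def kapply_def)
next
  case False
  hence pos: "inner_pi \<pi> f f > 0" using ip_nonneg[OF assms(1), of f] ip_zero[OF assms(1), of f]
    by fastforce
  have "sqrt (inner_pi \<pi> (kapply K f) (kapply K f)) / sqrt (inner_pi \<pi> f f) \<le> opnorm_l2_0 \<pi> K"
    unfolding opnorm_l2_0_def by (rule cSup_upper[OF _ op_bdd[OF assms(1)]]) (use assms False in auto)
  thus ?thesis using pos by (simp add: divide_le_eq)
qed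

lemma polar:
  assumes pf: "pmf_full \<pi>" and sa: "\<And>x y. \<pi> x * K x y = \<pi> y * K y x"
    and bd: "\<And>w. w \<in> l2_0 \<pi> \<Longrightarrow> \<bar>inner_pi \<pi> w (kapply K w)\<bar> \<le> r * inner_pi \<pi> w w"
    and u: "u \<in> l2_0 \<pi>" and v: "v \<in> l2_0 \<pi>"
  shows "\<bar>inner_pi \<pi> u (kapply K v)\<bar> \<le> r * sqrt (inner_pi \<pi> u u) * sqrt (inner_pi \<pi> v v)"
proof -
  have half: "2 * \<bar>inner_pi \<pi> a (kapply K b)\<bar> \<le> r * (inner_pi \<pi> a a + inner_pi \<pi> b b)"
    if a: "a \<in> l2_0 \<pi>" and b: "b \<in> l2_0 \<pi>" for a b
  proof -
    have symm: "inner_pi \<pi> b (kapply K a) = inner_pi \<pi> a (kapply K b)"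
      using selfadj[OF sa, where f=b and g=a] ip_sym[of \<pi> "kapply K b" a] by simp
    have e1: "inner_pi \<pi> (\<lambda>x. a x + b x) (kapply K (\<lambda>x. a x + b x)) =
      inner_pi \<pi> a (kapply K a) + 2 * inner_pi \<pi> a (kapply K b) + inner_pi \<pi> b (kapply K b)"
      using symm by (simp add: kapply_add ip_add_l ip_add_r)
    have e2: "inner_pi \<pi> (\<lambda>x. a x - b x) (kapply K (\<lambda>x. a x - b x)) =
      inner_pi \<pi> a (kapply K a) - 2 * inner_pi \<pi> a (kapply K b) + inner_pi \<pi> b (kapply K b)"
      using symm by (simp add: kapply_diff ip_diff_l ip_diff_r)
    have n1: "inner_pi \<pi> (\<lambda>x. a x + b x) (\<lambda>x. a x + b x) = inner_pi \<pi> a a + 2 * inner_pi \<pi> a b + inner_pi \<pi> b b"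
      using ip_sym[of \<pi> a b] by (simp add: ip_add_l ip_add_r)
    have n2: "inner_pi \<pi> (\<lambda>x. a x - b x) (\<lambda>x. a x - b x) = inner_pi \<pi> a a - 2 * inner_pi \<pi> a b + inner_pi \<pi> b b"
      using ip_sym[of \<pi> a b] by (simp add: ip_diff_l ip_diff_r)
    note b1 = bd[OF l2_0_add[OF a b]]
    note b2 = bd[OF l2_0_diff[OF a b]]
    define X where "X = inner_pi \<pi> a (kapply K b)"
    define S1 where "S1 = inner_pi \<pi> (\<lambda>x. a x + b x) (\<lambda>x. a x + b x)"
    define S2 where "S2 = inner_pi \<pi> (\<lambda>x. a x - b x) (\<lambda>x. a x - b x)"
    have "S1 + S2 = 2 * (inner_pi \<pi> a a + inner_pi \<pi> b b)" unfolding S1_def S2_def n1 n2 by simp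
    hence rs: "r * S1 + r * S2 = 2 * (r * (inner_pi \<pi> a a + inner_pi \<pi> b b))"
      by (metis distrib_left mult.left_commute)
    have "4 * X = inner_pi \<pi> (\<lambda>x. a x + b x) (kapply K (\<lambda>x. a x + b x))
         - inner_pi \<pi> (\<lambda>x. a x - b x) (kapply K (\<lambda>x. a x - b x))"
      unfolding e1 e2 X_def by simp
    hence "4 * \<bar>X\<bar> \<le> r * S1 + r * S2" using b1 b2 unfolding S1_def S2_def by linarith
    thus ?thesis using rs unfolding X_def by linarith
  qed
  define nu where "nu = sqrt (inner_pi \<pi> u u)"
  define nv where "nv = sqrt (inner_pi \<pi> v v)"
  have nu2: "nu * nu = inner_pi \<pi> u u" unfolding nu_def using ip_nonneg[OF pf] by simp
  have nv2: "nv * nv = inner_pi \<pi> v v" unfolding nv_def using ip_nonneg[OF pf] by simp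
  show ?thesis
  proof (cases "nu = 0 \<or> nv = 0")
    case True
    then have "u = (\<lambda>_. 0) \<or> v = (\<lambda>_. 0)" using nu2 nv2 ip_zero[OF pf] by auto
    then show ?thesis by (auto simp: inner_pi_def kapply_def)
  next
    case False
    have pos: "nu > 0" "nv > 0" using False ip_nonneg[OF pf, of u] ip_nonneg[OF pf, of v] unfolding nu_def nv_def by auto
    have "2 * \<bar>inner_pi \<pi> (\<lambda>x. nv * u x) (kapply K (\<lambda>x. nu * v x))\<bar>
       \<le> r * (inner_pi \<pi> (\<lambda>x. nv * u x) (\<lambda>x. nv * u x) + inner_pi \<pi> (\<lambda>x. nu * v x) (\<lambda>x. nu * v x))"
      by (rule half[OF l2_0_scale[OF u] l2_0_scale[OF v]])
    moreover have "inner_pi \<pi> (\<lambda>x. nv * u x) (kapply K (\<lambda>x. nu * v x)) = nv * (nu * inner_pi \<pi> u (kapply K v))"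
      by (simp add: kapply_scale ip_scale_l ip_scale_r)
    moreover have "inner_pi \<pi> (\<lambda>x. nv * u x) (\<lambda>x. nv * u x) = (nu * nv) * (nu * nv)"
      using nu2 by (simp add: ip_scale_l ip_scale_r)
    moreover have "inner_pi \<pi> (\<lambda>x. nu * v x) (\<lambda>x. nu * v x) = (nu * nv) * (nu * nv)"
      using nv2 by (simp add: ip_scale_l ip_scale_r)
    ultimately have "2 * (nv * nu) * \<bar>inner_pi \<pi> u (kapply K v)\<bar> \<le> r * (2 * (nu * nv) * (nu * nv))"
      using pos by (simp add: abs_mult)
    hence "(nu * nv) * \<bar>inner_pi \<pi> u (kapply K v)\<bar> \<le> (nu * nv) * (r * nu * nv)"
      by (simp add: algebra_simps)
    hence "\<bar>inner_pi \<pi> u (kapply K v)\<bar> \<le> r * nu * nv"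
      using pos by (simp add: mult_le_cancel_left)
    thus ?thesis unfolding nu_def nv_def .
  qed
qed




lemma sum_if_mem: "(\<Sum>y\<in>(UNIV::'x::finite set). if y \<in> B then g y else 0) = sum g B"
  using sum.inter_restrict[of "UNIV::'x set" g B] by simp

locale orbs =
  fixes \<pi> :: "'x::finite \<Rightarrow> real" and Orb :: "'x \<Rightarrow> 'x set"
  assumes pf: "pmf_full \<pi>"
    and orefl: "\<And>x. x \<in> Orb x"
    and oeq: "\<And>x y. y \<in> Orb x \<Longrightarrow> Orb y = Orb x"
begin

lemma pipos: "\<pi> x > 0" using pf unfolding pmf_full_def by auto

lemma Zpos: "(\<Sum>z\<in>Orb x. \<pi> z) > 0"
  using orefl[of x] pipos by (intro sum_pos2[of _ x]) (auto intro: less_imp_le)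

lemma osym: "y \<in> Orb x \<Longrightarrow> x \<in> Orb y"
  using oeq[where x=x and y=y] orefl[of x] by simp

lemma G_row: "(\<Sum>y\<in>UNIV. gibbs_kernel \<pi> Orb x y) = 1"
proof -
  have "(\<Sum>y\<in>UNIV. gibbs_kernel \<pi> Orb x y) = (\<Sum>y\<in>Orb x. \<pi> y / (\<Sum>z\<in>Orb x. \<pi> z))"
    unfolding gibbs_kernel_def by (rule sum_if_mem)
  also have "\<dots> = 1" using Zpos[of x] by (simp add: sum_divide_distrib[symmetric])
  finally show ?thesis .
qed

lemma G_rev: "\<pi> x * gibbs_kernel \<pi> Orb x y = \<pi> y * gibbs_kernel \<pi> Orb y x"
proof (cases "y \<in> Orb x")
  case True
  then have "x \<in> Orb y" "Orb y = Orb x" using osym[OF True] oeq[OF True] by auto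
  then show ?thesis using True unfolding gibbs_kernel_def by simp
next
  case False
  then have "x \<notin> Orb y" using oeq[where x=y and y=x] orefl[of y] by auto
  then show ?thesis using False unfolding gibbs_kernel_def by simp
qed

lemma G_same: "y \<in> Orb x \<Longrightarrow> gibbs_kernel \<pi> Orb y z = gibbs_kernel \<pi> Orb x z"
  unfolding gibbs_kernel_def using oeq[where x=x and y=y] by simp

lemma kmul_absorb:
  assumes "\<And>x y. K x y \<noteq> 0 \<Longrightarrow> y \<in> Orb x" and "\<And>x. (\<Sum>y\<in>UNIV. K x y) = 1"
  shows "kmul K (gibbs_kernel \<pi> Orb) = gibbs_kernel \<pi> Orb"
proof (intro ext)
  fix x z
  have "kmul K (gibbs_kernel \<pi> Orb) x z = (\<Sum>y\<in>UNIV. K x y * gibbs_kernel \<pi> Orb x z)"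
    unfolding kmul_def
  proof (rule sum.cong)
    fix y
    show "K x y * gibbs_kernel \<pi> Orb y z = K x y * gibbs_kernel \<pi> Orb x z"
      using assms(1)[of x y] G_same[of y x z] by (cases "K x y = 0") auto
  qed simp
  also have "\<dots> = gibbs_kernel \<pi> Orb x z" using assms(2)[of x] by (simp add: sum_distrib_right[symmetric])
  finally show "kmul K (gibbs_kernel \<pi> Orb) x z = gibbs_kernel \<pi> Orb x z" .
qed

lemma G_idem: "kmul (gibbs_kernel \<pi> Orb) (gibbs_kernel \<pi> Orb) = gibbs_kernel \<pi> Orb"
  by (rule kmul_absorb[OF _ G_row]) (simp add: gibbs_kernel_def split: if_splits)

lemma M_supp: "mh_kernel \<pi> Orb x y \<noteq> 0 \<Longrightarrow> y \<in> Orb x"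
  unfolding mh_kernel_def using orefl by (auto split: if_splits)

lemma M_row: "(\<Sum>y\<in>UNIV. mh_kernel \<pi> Orb x y) = 1"
proof -
  define c where "c = (1 / (real (card (Orb x)) - 1))"
  have "(\<Sum>y\<in>UNIV. mh_kernel \<pi> Orb x y) = mh_kernel \<pi> Orb x x + (\<Sum>y\<in>UNIV - {x}. mh_kernel \<pi> Orb x y)"
    by (simp add: sum.remove)
  also have "(\<Sum>y\<in>UNIV - {x}. mh_kernel \<pi> Orb x y) = (\<Sum>y\<in>UNIV - {x}. if y \<in> Orb x - {x} then c * min 1 (\<pi> y / \<pi> x) else 0)"
    unfolding mh_kernel_def c_def by (rule sum.cong) auto
  also have "\<dots> = (\<Sum>y\<in>UNIV. if y \<in> Orb x - {x} then c * min 1 (\<pi> y / \<pi> x) else 0)"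
    by (rule sum.mono_neutral_left) auto
  also have "\<dots> = (\<Sum>y\<in>Orb x - {x}. c * min 1 (\<pi> y / \<pi> x))" by (rule sum_if_mem)
  finally show ?thesis unfolding mh_kernel_def c_def by simp
qed

lemma M_rev: "\<pi> x * mh_kernel \<pi> Orb x y = \<pi> y * mh_kernel \<pi> Orb y x"
proof (cases "y = x")
  case True thus ?thesis by simp
next
  case ne: False
  show ?thesis
  proof (cases "y \<in> Orb x")
    case True
    then have xo: "x \<in> Orb y" and oe: "Orb y = Orb x" using osym[OF True] oeq[OF True] by auto
    have a: "\<pi> x * min 1 (\<pi> y / \<pi> x) = min (\<pi> x) (\<pi> y)"
      using pipos[of x] by (simp add: min_mult_distrib_left)
    have b: "\<pi> y * min 1 (\<pi> x / \<pi> y) = min (\<pi> y) (\<pi> x)"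
      using pipos[of y] by (simp add: min_mult_distrib_left)
    have "\<pi> x * mh_kernel \<pi> Orb x y = (1 / (real (card (Orb x)) - 1)) * (\<pi> x * min 1 (\<pi> y / \<pi> x))"
      using True ne unfolding mh_kernel_def by simp
    also have "\<dots> = (1 / (real (card (Orb y)) - 1)) * (\<pi> y * min 1 (\<pi> x / \<pi> y))"
      using a b oe by (simp add: min.commute)
    also have "\<dots> = \<pi> y * mh_kernel \<pi> Orb y x"
      using xo ne unfolding mh_kernel_def by simp
    finally show ?thesis .
  next
    case False
    then have "x \<notin> Orb y" using oeq[where x=y and y=x] orefl[of y] by auto
    then show ?thesis using False ne unfolding mh_kernel_def by auto
  qed
qed

lemma M_G: "kmul (mh_kernel \<pi> Orb) (gibbs_kernel \<pi> Orb) = gibbs_kernel \<pi> Orb"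
  by (rule kmul_absorb[OF M_supp M_row])

end



theorem proposition3p5:
  fixes \<pi> :: "'x::finite \<Rightarrow> real" and P :: "'x \<Rightarrow> 'x \<Rightarrow> real"
    and \<G> :: "('g, 'm) monoid_scheme" and \<phi> :: "'g \<Rightarrow> 'x \<Rightarrow> 'x"
  assumes "pmf_full \<pi>"
    and "stochastic P" and "reversible \<pi> P" and "ergodic P"
    and "group_action \<G> UNIV \<phi>"
  defines "Gk \<equiv> gibbs_kernel \<pi> (orbit \<G> \<phi>)"
    and "Mk \<equiv> mh_kernel \<pi> (orbit \<G> \<phi>)"
  defines "\<theta> \<equiv> opnorm_l2_0 \<pi> (\<lambda>x y. Mk x y - Gk x y)"
  shows "0 \<le> rho \<pi> (kmul (kmul Mk P) Mk) - rho \<pi> (kmul (kmul Gk P) Gk)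
       \<and> rho \<pi> (kmul (kmul Mk P) Mk) - rho \<pi> (kmul (kmul Gk P) Gk) \<le> rho \<pi> P * (2 * \<theta> + \<theta>^2)"
proof -
  note pf = assms(1)
  interpret ga: group_action \<G> UNIV \<phi> by (rule assms(5))
  interpret orbs \<pi> "orbit \<G> \<phi>"
  proof
    show "pmf_full \<pi>" by (rule pf)
    show "\<And>x. x \<in> orbit \<G> \<phi> x" by (rule ga.orbit_refl) simp
    fix x y assume y: "y \<in> orbit \<G> \<phi> x"
    have xy: "x \<in> orbit \<G> \<phi> y" using ga.orbit_sym[OF _ _ y] by simp
    show "orbit \<G> \<phi> y = orbit \<G> \<phi> x"
    proof
      show "orbit \<G> \<phi> y \<subseteq> orbit \<G> \<phi> x" using ga.orbit_trans[OF _ _ _ y] by auto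
      show "orbit \<G> \<phi> x \<subseteq> orbit \<G> \<phi> y" using ga.orbit_trans[OF _ _ _ xy] by auto
    qed
  qed
  have Prev: "\<And>x y. \<pi> x * P x y = \<pi> y * P y x" using assms(3) unfolding reversible_def by auto
  have Prow: "\<And>x. (\<Sum>y\<in>UNIV. P x y) = 1" using assms(2) unfolding stochastic_def by auto
  have Grev: "\<And>x y. \<pi> x * Gk x y = \<pi> y * Gk y x" unfolding Gk_def by (rule G_rev)
  have Grow: "\<And>x. (\<Sum>y\<in>UNIV. Gk x y) = 1" unfolding Gk_def by (rule G_row)
  have Mrev: "\<And>x y. \<pi> x * Mk x y = \<pi> y * Mk y x" unfolding Mk_def by (rule M_rev)
  have Mrow: "\<And>x. (\<Sum>y\<in>UNIV. Mk x y) = 1" unfolding Mk_def by (rule M_row)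
  have MG: "\<And>h. kapply Mk (kapply Gk h) = kapply Gk h"
    using M_G unfolding Gk_def Mk_def by (metis kapply_kmul)
  have GG: "\<And>h. kapply Gk (kapply Gk h) = kapply Gk h"
    using G_idem unfolding Gk_def by (metis kapply_kmul)
  have SAG: "\<And>f g. inner_pi \<pi> f (kapply Gk g) = inner_pi \<pi> (kapply Gk f) g"
    by (rule selfadj) (rule Grev)
  have SAM: "\<And>f g. inner_pi \<pi> f (kapply Mk g) = inner_pi \<pi> (kapply Mk f) g"
    by (rule selfadj) (rule Mrev)
  have Gl2: "\<And>h. h \<in> l2_0 \<pi> \<Longrightarrow> kapply Gk h \<in> l2_0 \<pi>" by (rule l2_0_pres[OF Grev Grow])
  have Ml2: "\<And>h. h \<in> l2_0 \<pi> \<Longrightarrow> kapply Mk h \<in> l2_0 \<pi>" by (rule l2_0_pres[OF Mrev Mrow])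
  have GPG: "\<And>f. inner_pi \<pi> f (kapply (kmul (kmul Gk P) Gk) f) = inner_pi \<pi> (kapply Gk f) (kapply P (kapply Gk f))"
    by (simp add: kapply_kmul SAG)
  have MPM: "\<And>f. inner_pi \<pi> f (kapply (kmul (kmul Mk P) Mk) f) = inner_pi \<pi> (kapply Mk f) (kapply P (kapply Mk f))"
    by (simp add: kapply_kmul SAM)
  have Gnorm: "\<And>f. inner_pi \<pi> (kapply Gk f) (kapply Gk f) \<le> inner_pi \<pi> f f"
  proof -
    fix f
    have e: "inner_pi \<pi> (kapply Gk f) (kapply Gk f) = inner_pi \<pi> f (kapply Gk f)"
      using SAG[of f "kapply Gk f"] GG by simp
    have "0 \<le> inner_pi \<pi> (\<lambda>x. f x - kapply Gk f x) (\<lambda>x. f x - kapply Gk f x)" by (rule ip_nonneg[OF pf])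
    also have "\<dots> = inner_pi \<pi> f f - 2 * inner_pi \<pi> f (kapply Gk f) + inner_pi \<pi> (kapply Gk f) (kapply Gk f)"
      using ip_sym[of \<pi> f "kapply Gk f"] by (simp add: ip_diff_l ip_diff_r)
    finally show "inner_pi \<pi> (kapply Gk f) (kapply Gk f) \<le> inner_pi \<pi> f f" using e by simp
  qed
  define A where "A = rho \<pi> (kmul (kmul Mk P) Mk)"
  define B where "B = rho \<pi> (kmul (kmul Gk P) Gk)"
  define R where "R = rho \<pi> P"
  have A0: "0 \<le> A" unfolding A_def by (rule rho_nonneg[OF pf])
  have B0: "0 \<le> B" unfolding B_def by (rule rho_nonneg[OF pf])
  have R0: "0 \<le> R" unfolding R_def by (rule rho_nonneg[OF pf])
  have t0: "0 \<le> \<theta>" unfolding \<theta>_def by (rule op_nonneg[OF pf])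
  have part1: "B \<le> A" unfolding B_def
  proof (rule rho_least[OF _ A0 pf])
    fix f assume f: "f \<in> l2_0 \<pi>" "f \<noteq> (\<lambda>_. 0)"
    let ?g = "kapply Gk f"
    have "inner_pi \<pi> f (kapply (kmul (kmul Gk P) Gk) f) = inner_pi \<pi> ?g (kapply (kmul (kmul Mk P) Mk) ?g)"
      unfolding GPG MPM MG by simp
    hence "\<bar>inner_pi \<pi> f (kapply (kmul (kmul Gk P) Gk) f)\<bar> \<le> A * inner_pi \<pi> ?g ?g"
      unfolding A_def using rho_upper[OF pf Gl2[OF f(1)]] by simp
    also have "\<dots> \<le> A * inner_pi \<pi> f f" using A0 Gnorm by (intro mult_left_mono) auto
    finally show "\<bar>inner_pi \<pi> f (kapply (kmul (kmul Gk P) Gk) f)\<bar> \<le> A * inner_pi \<pi> f f" .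
  qed
  have part2: "A \<le> B + R * (2 * \<theta> + \<theta>^2)" unfolding A_def
  proof (rule rho_least[OF _ _ pf])
    show "0 \<le> B + R * (2 * \<theta> + \<theta>^2)" using B0 R0 t0 by simp
    fix f assume f: "f \<in> l2_0 \<pi>" "f \<noteq> (\<lambda>_. 0)"
    define g where "g = kapply Gk f"
    define d where "d = kapply (\<lambda>x y. Mk x y - Gk x y) f"
    have gl: "g \<in> l2_0 \<pi>" unfolding g_def by (rule Gl2[OF f(1)])
    have dd: "d = (\<lambda>x. kapply Mk f x - g x)" unfolding d_def g_def by (rule kapply_kdiff)
    have dl: "d \<in> l2_0 \<pi>" unfolding dd by (rule l2_0_diff[OF Ml2[OF f(1)] gl])
    have Mf: "kapply Mk f = (\<lambda>x. g x + d x)" unfolding dd by simp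
    define nf where "nf = sqrt (inner_pi \<pi> f f)"
    define ng where "ng = sqrt (inner_pi \<pi> g g)"
    define nd where "nd = sqrt (inner_pi \<pi> d d)"
    have nf0: "0 \<le> nf" unfolding nf_def using ip_nonneg[OF pf] by simp
    have ng0: "0 \<le> ng" unfolding ng_def using ip_nonneg[OF pf] by simp
    have nd0: "0 \<le> nd" unfolding nd_def using ip_nonneg[OF pf] by simp
    have nff: "nf * nf = inner_pi \<pi> f f" unfolding nf_def using ip_nonneg[OF pf] by simp
    have ngf: "ng \<le> nf" unfolding ng_def nf_def g_def using Gnorm by simp
    have ndf: "nd \<le> \<theta> * nf" unfolding nd_def nf_def \<theta>_def d_def by (rule op_upper[OF pf f(1)])
    have Pbd: "\<And>u v. u \<in> l2_0 \<pi> \<Longrightarrow> v \<in> l2_0 \<pi> \<Longrightarrow>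
        \<bar>inner_pi \<pi> u (kapply P v)\<bar> \<le> R * sqrt (inner_pi \<pi> u u) * sqrt (inner_pi \<pi> v v)"
      unfolding R_def by (rule polar[OF pf Prev rho_upper[OF pf]])
    have t1: "\<bar>inner_pi \<pi> g (kapply P g)\<bar> \<le> B * inner_pi \<pi> f f"
      using rho_upper[OF pf f(1), of "kmul (kmul Gk P) Gk"] unfolding GPG B_def g_def .
    have t2: "\<bar>inner_pi \<pi> g (kapply P d)\<bar> \<le> R * \<theta> * inner_pi \<pi> f f"
    proof -
      have "\<bar>inner_pi \<pi> g (kapply P d)\<bar> \<le> R * ng * nd" unfolding ng_def nd_def by (rule Pbd[OF gl dl])
      also have "\<dots> \<le> R * nf * (\<theta> * nf)" using R0 ng0 nd0 ngf ndf
        by (intro mult_mono mult_left_mono) auto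
      finally show ?thesis using nff by (simp add: algebra_simps)
    qed
    have t3: "\<bar>inner_pi \<pi> d (kapply P g)\<bar> \<le> R * \<theta> * inner_pi \<pi> f f"
    proof -
      have "\<bar>inner_pi \<pi> d (kapply P g)\<bar> \<le> R * nd * ng" unfolding ng_def nd_def by (rule Pbd[OF dl gl])
      also have "\<dots> \<le> R * (\<theta> * nf) * nf" using R0 ng0 nd0 ngf ndf t0 nf0
        by (intro mult_mono mult_left_mono) auto
      finally show ?thesis using nff by (simp add: algebra_simps)
    qed
    have t4: "\<bar>inner_pi \<pi> d (kapply P d)\<bar> \<le> R * \<theta>^2 * inner_pi \<pi> f f"
    proof -
      have "\<bar>inner_pi \<pi> d (kapply P d)\<bar> \<le> R * nd * nd" unfolding nd_def by (rule Pbd[OF dl dl])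
      also have "\<dots> \<le> R * (\<theta> * nf) * (\<theta> * nf)" using R0 nd0 ndf t0 nf0
        by (intro mult_mono mult_left_mono) auto
      finally show ?thesis using nff by (simp add: algebra_simps power2_eq_square)
    qed
    have "inner_pi \<pi> f (kapply (kmul (kmul Mk P) Mk) f)
        = inner_pi \<pi> g (kapply P g) + inner_pi \<pi> g (kapply P d) + inner_pi \<pi> d (kapply P g) + inner_pi \<pi> d (kapply P d)"
      unfolding MPM Mf by (simp add: kapply_add ip_add_l ip_add_r)
    hence "\<bar>inner_pi \<pi> f (kapply (kmul (kmul Mk P) Mk) f)\<bar> \<le> B * inner_pi \<pi> f f + R * \<theta> * inner_pi \<pi> f f
        + R * \<theta> * inner_pi \<pi> f f + R * \<theta>^2 * inner_pi \<pi> f f"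
      using t1 t2 t3 t4 by linarith
    thus "\<bar>inner_pi \<pi> f (kapply (kmul (kmul Mk P) Mk) f)\<bar> \<le> (B + R * (2 * \<theta> + \<theta>^2)) * inner_pi \<pi> f f"
      by (simp add: algebra_simps)
  qed
  show ?thesis using part1 part2 unfolding A_def B_def R_def by simp
qed


end
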